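(* Let $\alpha\in(0,1/2]$. Then for all integers $n\ge1$ and $a,b\ge0$, $$\sum_{0\le l\le n}\binom nl\alpha^l(1-\alpha)^{n-l}\,\mathbf 1_{\gcd(l+a,n+b)=1}=\sum_{d\mid n+b}\frac{\mu(d)}{d}+O\Big(\frac{\tau(n+b)}{\sqrt n}\Big),$$ where the implied constant depends only on $\alpha$.
   Context: $\mu$ is the Möbius function, $\tau(m)$ the number of positive divisors of $m$, and $\mathbf 1_A$ the indicator of the condition $A$. *)

theory Defs
  imports Complex_Main "HOL-Computational_Algebra.Squarefree" "HOL-Computational_Algebra.Primes"
begin

definition mu :: "nat \<Rightarrow> int" where
  "mu d = (if d = 0 \<or> \<not> squarefree d then 0 else (-1) ^ card (prime_factors d))"

definition tau :: "nat \<Rightarrow> nat" where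
  "tau m = card {d. d dvd m}"

end

theory Submission imports Defs begin

definition pb :: "real \<Rightarrow> nat \<Rightarrow> nat \<Rightarrow> real" where
  "pb x n l = real (n choose l) * x^l * (1-x)^(n-l)"

lemma pb_S0: "(\<Sum>l\<le>n. pb x n l) = 1"
  using binomial_ring[of x "1-x" n] by (simp add: pb_def)

lemma pb_Suc: "pb x (Suc m) (Suc l) * real (Suc l) = real (Suc m) * x * pb x m l"
proof -
  have "real (Suc m choose Suc l) * real (Suc l) = real (Suc m) * real (m choose l)"
    using Suc_times_binomial[of l m] by (metis of_nat_mult mult.commute)
  have "pb x (Suc m) (Suc l) * real (Suc l) = (real (Suc m choose Suc l) * real (Suc l)) * (x * (x^l * (1-x)^(m-l)))"
    unfolding pb_def by (simp only: diff_Suc_Suc power_Suc mult_ac)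
  also have "\<dots> = real (Suc m) * x * pb x m l" unfolding pb_def \<open>real (Suc m choose Suc l) * real (Suc l) = _\<close>
    by (simp only: mult_ac)
  finally show ?thesis .
qed

lemma pb_S1: "(\<Sum>l\<le>n. real l * pb x n l) = real n * x"
proof (cases n)
  case 0 then show ?thesis by simp
next
  case (Suc m)
  have "(\<Sum>l\<le>n. real l * pb x n l) = (\<Sum>l\<le>m. real (Suc l) * pb x (Suc m) (Suc l))"
    unfolding Suc by (subst sum.atMost_Suc_shift) simp
  also have "\<dots> = (\<Sum>l\<le>m. real (Suc m) * x * pb x m l)"
    by (intro sum.cong refl) (metis pb_Suc mult.commute)
  also have "\<dots> = real (Suc m) * x" by (simp add: sum_distrib_left[symmetric] pb_S0)
  finally show ?thesis using Suc by simp
qed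

lemma pb_S2: "(\<Sum>l\<le>n. real l * (real l - 1) * pb x n l) = real n * (real n - 1) * x^2"
proof (cases n)
  case 0 then show ?thesis by simp
next
  case (Suc m)
  have "(\<Sum>l\<le>n. real l * (real l - 1) * pb x n l) = (\<Sum>l\<le>m. real l * (real (Suc l) * pb x (Suc m) (Suc l)))"
    unfolding Suc by (subst sum.atMost_Suc_shift) (simp add: algebra_simps)
  also have "\<dots> = (\<Sum>l\<le>m. real (Suc m) * x * (real l * pb x m l))"
    by (intro sum.cong refl) (metis pb_Suc mult.assoc mult.commute)
  also have "\<dots> = real (Suc m) * x * (real m * x)" by (simp add: sum_distrib_left[symmetric] pb_S1)
  finally show ?thesis using Suc by (simp add: power2_eq_square)
qed

lemma pb_var: "(\<Sum>l\<le>n. (real l - real n * x)^2 * pb x n l) = real n * x * (1 - x)"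
proof -
  have "(\<Sum>l\<le>n. (real l - real n * x)^2 * pb x n l) =
     (\<Sum>l\<le>n. real l * (real l - 1) * pb x n l) + (1 - 2 * real n * x) * (\<Sum>l\<le>n. real l * pb x n l)
      + (real n * x)^2 * (\<Sum>l\<le>n. pb x n l)"
    by (simp add: sum_distrib_left sum.distrib[symmetric] power2_eq_square algebra_simps)
  also have "\<dots> = real n * x * (1 - x)" unfolding pb_S0 pb_S1 pb_S2 by (simp add: power2_eq_square algebra_simps)
  finally show ?thesis .
qed

lemma pb_nonneg: "0 \<le> x \<Longrightarrow> x \<le> 1 \<Longrightarrow> 0 \<le> pb x n l"
  unfolding pb_def by simp

lemma pb_zero: "n < l \<Longrightarrow> pb x n l = 0"
  unfolding pb_def by simp

lemma pb_E:
  assumes "0 \<le> x" "x \<le> 1" "n \<ge> 1"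
  shows "(\<Sum>l\<le>n. \<bar>real l - real n * x\<bar> * pb x n l) \<le> sqrt (real n)"
proof -
  define s where "s = sqrt (real n)"
  have s: "s > 0" "s * s = real n" using assms(3) by (auto simp: s_def)
  have key: "\<bar>t\<bar> \<le> t^2 / (2*s) + s/2" for t :: real
  proof -
    have "0 \<le> (\<bar>t\<bar> - s)^2" by simp
    hence "2 * s * \<bar>t\<bar> \<le> t^2 + s*s" by (simp add: power2_eq_square algebra_simps)
    thus ?thesis using s by (simp add: field_simps power2_eq_square)
  qed
  have "(\<Sum>l\<le>n. \<bar>real l - real n * x\<bar> * pb x n l) \<le>
        (\<Sum>l\<le>n. ((real l - real n * x)^2 / (2*s) + s/2) * pb x n l)"
    by (intro sum_mono mult_right_mono key pb_nonneg assms)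
  also have "\<dots> = (\<Sum>l\<le>n. (real l - real n * x)^2 * pb x n l) / (2*s) + s/2 * (\<Sum>l\<le>n. pb x n l)"
    by (simp add: sum.distrib sum_distrib_left sum_divide_distrib algebra_simps)
  also have "\<dots> = real n * x * (1 - x) / (2*s) + s/2" by (simp add: pb_var pb_S0)
  also have "\<dots> \<le> real n / (2*s) + s/2"
  proof -
    have "x * (1 - x) \<le> 1" using assms by (intro mult_le_one) auto
    hence "real n * x * (1 - x) \<le> real n" by (metis mult.assoc mult_left_le of_nat_0_le_iff mult.commute)
    thus ?thesis using s by (simp add: divide_right_mono)
  qed
  also have "\<dots> = s" using s by (simp add: field_simps)
  finally show ?thesis by (simp add: s_def)
qed

definition pm :: "real \<Rightarrow> nat \<Rightarrow> nat \<Rightarrow> real" where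
  "pm x n l = (if l = 0 then 0 else pb x n (l - 1))"

lemma pb_R: "real l * (1 - x) * pb x n l = real (n + 1 - l) * x * pm x n l"
proof (cases l)
  case 0 then show ?thesis by (simp add: pm_def)
next
  case (Suc k)
  have c: "Suc k * (n choose Suc k) = (n - k) * (n choose k)"
    using binomial_absorption[of k n] binomial_absorb_comp[of n k] by simp
  show ?thesis
  proof (cases "k < n")
    case True
    have e: "n - k = Suc (n - Suc k)" using True by simp
    have "real l * (1 - x) * pb x n l = real (Suc k * (n choose Suc k)) * (x * x^k * ((1-x) * (1-x)^(n - Suc k)))"
      unfolding pb_def Suc by (simp only: of_nat_mult power_Suc mult_ac)
    also have "\<dots> = real ((n - k) * (n choose k)) * (x * x^k * (1-x)^(n - k))"
      unfolding c e by (simp only: power_Suc)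
    also have "\<dots> = real (n + 1 - l) * x * pm x n l"
      unfolding pm_def pb_def Suc by (simp add: mult_ac)
    finally show ?thesis .
  next
    case False
    then show ?thesis unfolding pm_def pb_def Suc by simp
  qed
qed

lemma pm_nonneg: "0 \<le> x \<Longrightarrow> x \<le> 1 \<Longrightarrow> 0 \<le> pm x n l"
  unfolding pm_def using pb_nonneg by simp

lemma pb_D:
  assumes "0 < x" "x \<le> 1/2" "l \<le> n + 1"
  shows "\<bar>pb x n l - pm x n l\<bar> * (real (n+1) * x) \<le>
     2 * (\<bar>real (n+1) * x - real l\<bar> * pb x n l + \<bar>real (n+1) * x - real l\<bar> * pm x n l)"
proof -
  define c where "c = real (n+1) * x - real l"
  have nn: "0 \<le> pb x n l" "0 \<le> pm x n l" using assms by (auto intro: pb_nonneg pm_nonneg)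
  have A: "real (n + 1 - l) = real (n+1) - real l" using assms(3) by (simp add: of_nat_diff)
  have R: "real l * (1 - x) * pb x n l = (real (n+1) - real l) * x * pm x n l"
    using pb_R[of l x n] A by simp
  show ?thesis
  proof (cases "2 * l \<le> n + 1")
    case True
    have id: "(real (n+1) - real l) * x * (pb x n l - pm x n l) = c * pb x n l"
      using R unfolding c_def by (simp add: algebra_simps)
    have h: "real (n+1) * x \<le> 2 * ((real (n+1) - real l) * x)"
    proof -
      have "real (2*l) \<le> real (n+1)" using True by linarith
      hence "x * real (n+1) \<ge> x * real (2*l)" using assms(1) by (intro mult_left_mono) auto
      thus ?thesis by (simp add: algebra_simps)
    qed
    have "\<bar>pb x n l - pm x n l\<bar> * (real (n+1) * x) \<le> \<bar>pb x n l - pm x n l\<bar> * (2 * ((real (n+1) - real l) * x))"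
      by (intro mult_left_mono h) simp
    also have "\<dots> = 2 * \<bar>(real (n+1) - real l) * x * (pb x n l - pm x n l)\<bar>"
      using h assms(1) by (simp add: abs_mult)
    also have "\<dots> = 2 * (\<bar>c\<bar> * pb x n l)" unfolding id using nn by (simp add: abs_mult)
    also have "\<dots> \<le> 2 * (\<bar>c\<bar> * pb x n l + \<bar>c\<bar> * pm x n l)" using nn by simp
    finally show ?thesis unfolding c_def .
  next
    case False
    have id: "real l * (1 - x) * (pb x n l - pm x n l) = c * pm x n l"
      using R unfolding c_def by (simp add: algebra_simps)
    have h: "real (n+1) * x \<le> 2 * (real l * (1 - x))"
    proof -
      have "real (n+1) \<le> real (2*l)" using False by linarith
      hence "real (n+1) * x \<le> 2 * real l * x" using assms(1) by (simp add: mult_right_mono)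
      also have "\<dots> \<le> 2 * real l * (1 - x)" using assms by (intro mult_left_mono) auto
      finally show ?thesis by simp
    qed
    have "\<bar>pb x n l - pm x n l\<bar> * (real (n+1) * x) \<le> \<bar>pb x n l - pm x n l\<bar> * (2 * (real l * (1 - x)))"
      by (intro mult_left_mono h) simp
    also have "\<dots> = 2 * \<bar>real l * (1 - x) * (pb x n l - pm x n l)\<bar>"
      using assms by (simp add: abs_mult)
    also have "\<dots> = 2 * (\<bar>c\<bar> * pm x n l)" unfolding id using nn by (simp add: abs_mult)
    also have "\<dots> \<le> 2 * (\<bar>c\<bar> * pb x n l + \<bar>c\<bar> * pm x n l)" using nn by simp
    finally show ?thesis unfolding c_def .
  qed
qed

lemma V_bound:
  assumes "0 < x" "x \<le> 1/2" "n \<ge> 1"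
  shows "(\<Sum>l<n+2. \<bar>pb x n l - pm x n l\<bar>) \<le> 8 / (x * sqrt (real n))"
proof -
  define c where "c l = \<bar>real (n+1) * x - real l\<bar>" for l
  have x1: "x \<le> 1" using assms by simp
  have E: "(\<Sum>l\<le>n. \<bar>real l - real n * x\<bar> * pb x n l) \<le> sqrt (real n)"
    using pb_E[OF less_imp_le[OF assms(1)] x1 assms(3)] .
  have "(\<Sum>l<n+2. \<bar>pb x n l - pm x n l\<bar>) * (real (n+1) * x) =
        (\<Sum>l<n+2. \<bar>pb x n l - pm x n l\<bar> * (real (n+1) * x))" by (rule sum_distrib_right)
  also have "\<dots> \<le> (\<Sum>l<n+2. 2 * (c l * pb x n l + c l * pm x n l))"
    unfolding c_def by (intro sum_mono pb_D assms) auto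
  also have "\<dots> = 2 * (\<Sum>l<n+2. c l * pb x n l) + 2 * (\<Sum>l<n+2. c l * pm x n l)"
    by (simp add: sum.distrib sum_distrib_left)
  also have "\<dots> \<le> 2 * (sqrt (real n) + 1) + 2 * (sqrt (real n) + 1)"
  proof -
    have "(\<Sum>l<n+2. c l * pb x n l) = (\<Sum>l\<le>n. c l * pb x n l)"
    proof -
      have "{..<n+2} = insert (n+1) {..n}" by auto
      thus ?thesis by (simp add: pb_zero)
    qed
    also have "\<dots> \<le> (\<Sum>l\<le>n. \<bar>real l - real n * x\<bar> * pb x n l + pb x n l)"
    proof (intro sum_mono)
      fix l assume "l \<in> {..n}"
      have "c l \<le> \<bar>real l - real n * x\<bar> + 1" unfolding c_def using assms by (simp add: abs_if algebra_simps)
      thus "c l * pb x n l \<le> \<bar>real l - real n * x\<bar> * pb x n l + pb x n l"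
        using pb_nonneg[OF less_imp_le[OF assms(1)] x1, of n l] by (metis mult_right_mono distrib_right mult_1 mult.commute)
    qed
    also have "\<dots> \<le> sqrt (real n) + 1" using E by (simp add: sum.distrib pb_S0)
    finally have 1: "(\<Sum>l<n+2. c l * pb x n l) \<le> sqrt (real n) + 1" .
    have "(\<Sum>l<n+2. c l * pm x n l) = (\<Sum>l<n+1. c (Suc l) * pb x n l)"
      unfolding add_2_eq_Suc' by (subst sum.lessThan_Suc_shift) (simp add: pm_def)
    also have "\<dots> = (\<Sum>l\<le>n. c (Suc l) * pb x n l)" by (simp add: lessThan_Suc_atMost)
    also have "\<dots> \<le> (\<Sum>l\<le>n. \<bar>real l - real n * x\<bar> * pb x n l + pb x n l)"
    proof (intro sum_mono)
      fix l assume "l \<in> {..n}"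
      have "c (Suc l) \<le> \<bar>real l - real n * x\<bar> + 1" unfolding c_def using assms by (simp add: abs_if algebra_simps)
      thus "c (Suc l) * pb x n l \<le> \<bar>real l - real n * x\<bar> * pb x n l + pb x n l"
        using pb_nonneg[OF less_imp_le[OF assms(1)] x1, of n l] by (metis mult_right_mono distrib_right mult_1 mult.commute)
    qed
    also have "\<dots> \<le> sqrt (real n) + 1" using E by (simp add: sum.distrib pb_S0)
    finally have 2: "(\<Sum>l<n+2. c l * pm x n l) \<le> sqrt (real n) + 1" .
    show ?thesis using 1 2 by simp
  qed
  finally have main: "(\<Sum>l<n+2. \<bar>pb x n l - pm x n l\<bar>) * (real (n+1) * x) \<le> 4 * (sqrt (real n) + 1)" by simp
  define s where "s = sqrt (real n)"
  have s: "s \<ge> 1" "s * s = real n" using assms(3) by (auto simp: s_def)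
  have pos: "real (n+1) * x > 0" using assms by simp
  have "(\<Sum>l<n+2. \<bar>pb x n l - pm x n l\<bar>) \<le> 4 * (s + 1) / (real (n+1) * x)"
    using main pos by (simp add: s_def pos_le_divide_eq)
  also have "\<dots> \<le> 8 / (x * s)"
  proof -
    have "4 * (s + 1) * (x * s) \<le> 8 * (real (n+1) * x)"
    proof -
      have "s * 1 \<le> s * s" using s by (intro mult_left_mono) auto
      hence h: "(s+1) * s \<le> 2 * (s * s + 1)" by (simp add: algebra_simps)
      have "4 * (s + 1) * (x * s) = (4*x) * ((s+1) * s)" by (simp add: algebra_simps)
      also have "\<dots> \<le> (4*x) * (2 * (s * s + 1))" using h assms(1) by (intro mult_left_mono) auto
      also have "\<dots> = 8 * (real (n+1) * x)" using s by (simp add: algebra_simps)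
      finally show ?thesis .
    qed
    thus ?thesis using pos s assms(1) by (simp add: divide_simps mult.commute)
  qed
  finally show ?thesis by (simp add: s_def)
qed

lemma count_dvd:
  assumes "d > 0"
  shows "card {j. j < N \<and> d dvd j + a} + (a + d - 1) div d = (a + N + d - 1) div d"
proof (induction N)
  case 0 then show ?case by simp
next
  case (Suc N)
  have set: "{j. j < Suc N \<and> d dvd j + a} = {j. j < N \<and> d dvd j + a} \<union> (if d dvd N + a then {N} else {})"
    by (auto simp: less_Suc_eq)
  have fin: "finite {j. j < N \<and> d dvd j + a}" by simp
  have c: "card {j. j < Suc N \<and> d dvd j + a} = card {j. j < N \<and> d dvd j + a} + (if d dvd N + a then 1 else 0)"
    unfolding set using fin by (auto simp: card_insert_if)
  have e: "a + Suc N + d - 1 = Suc (a + N + d - 1)" using assms by simp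
  have e2: "Suc (a + N + d - 1) = (N + a) + d" using assms by simp
  have m: "(Suc (a + N + d - 1) mod d = 0) = (d dvd N + a)"
    unfolding e2 by (simp add: dvd_eq_mod_eq_0)
  show ?case unfolding c e div_Suc m using Suc.IH by simp
qed

lemma G_bound:
  assumes "d > 0"
  shows "\<bar>(\<Sum>j<N. (if d dvd j + a then 1 else 0) - 1 / real d)\<bar> \<le> 1"
proof -
  define K where "K = card {j. j < N \<and> d dvd j + a}"
  define Y where "Y = a + d - 1"
  have YN: "Y + N = a + N + d - 1" unfolding Y_def using assms by simp
  have cnt: "K + Y div d = (Y + N) div d" unfolding K_def YN unfolding Y_def using count_dvd[OF assms, of N a] .
  have s1: "(\<Sum>j<N. (if d dvd j + a then 1 else 0 :: real)) = real K"
  proof -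
    have "(\<Sum>j<N. (if d dvd j + a then 1 else 0 :: real)) = real (card ({..<N} \<inter> {j. d dvd j + a}))"
      by (simp add: sum.If_cases)
    also have "{..<N} \<inter> {j. d dvd j + a} = {j. j < N \<and> d dvd j + a}" by auto
    finally show ?thesis by (simp add: K_def)
  qed
  have eq1: "d * (Y div d) + Y mod d = Y" by simp
  have eq2: "d * ((Y + N) div d) + (Y + N) mod d = Y + N" by simp
  have "real d * real K = real N + real (Y mod d) - real ((Y + N) mod d)"
  proof -
    have "d * K + d * (Y div d) + (Y + N) mod d = N + Y mod d + d * (Y div d)"
      using eq1 eq2 cnt by (metis add.assoc add.commute distrib_left)
    hence "real (d * K + d * (Y div d) + (Y + N) mod d) = real (N + Y mod d + d * (Y div d))" by (simp only:)
    thus ?thesis by (simp only: of_nat_add of_nat_mult)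
  qed
  moreover have "real (Y mod d) < real d" "real ((Y + N) mod d) < real d" using assms by auto
  ultimately have "\<bar>real d * real K - real N\<bar> \<le> real d" by linarith
  hence "\<bar>real K - real N / real d\<bar> \<le> 1" using assms
    by (simp add: abs_le_iff field_simps)
  moreover have "(\<Sum>j<N. (if d dvd j + a then 1 else 0) - 1 / real d) = real K - real N / real d"
    using s1 by (simp add: sum_subtractf)
  ultimately show ?thesis by simp
qed

lemma sbp:
  assumes "Pm 0 = 0" "\<And>l. Pm (Suc l) = P l"
  shows "(\<Sum>l<N. P l * (G (Suc l) - G l) + G l * (P l - Pm l)) = Pm N * (G N :: real)"
  by (induction N) (simp_all add: assms algebra_simps)

lemma equi:
  assumes "0 < x" "x \<le> 1/2" "d > 0"
  shows "\<bar>(\<Sum>l\<le>n. pb x n l * (if d dvd l + a then 1 else 0)) - 1 / real d\<bar>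
     \<le> (\<Sum>l<n+2. \<bar>pb x n l - pm x n l\<bar>)"
proof -
  define g where "g j = (if d dvd j + a then 1 else 0) - 1 / real d" for j
  define G where "G N = (\<Sum>j<N. g j)" for N
  have x1: "0 \<le> x" "x \<le> 1" using assms by auto
  have Gs: "G (Suc l) - G l = g l" for l by (simp add: G_def)
  have "(\<Sum>l<n+2. pb x n l * (G (Suc l) - G l) + G l * (pb x n l - pm x n l)) = pm x n (n+2) * G (n+2)"
    by (rule sbp) (auto simp: pm_def)
  also have "pm x n (n+2) = 0" by (simp add: pm_def pb_zero)
  finally have "(\<Sum>l<n+2. pb x n l * g l) = - (\<Sum>l<n+2. G l * (pb x n l - pm x n l))"
    unfolding Gs by (simp add: sum.distrib eq_neg_iff_add_eq_0)
  moreover have "(\<Sum>l<n+2. pb x n l * g l) = (\<Sum>l\<le>n. pb x n l * g l)"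
  proof -
    have "{..<n+2} = insert (n+1) {..n}" by auto
    thus ?thesis by (simp add: pb_zero)
  qed
  moreover have "(\<Sum>l\<le>n. pb x n l * g l) = (\<Sum>l\<le>n. pb x n l * (if d dvd l + a then 1 else 0)) - 1 / real d"
    unfolding g_def by (simp add: right_diff_distrib sum_subtractf sum_divide_distrib[symmetric] pb_S0)
  ultimately have "\<bar>(\<Sum>l\<le>n. pb x n l * (if d dvd l + a then 1 else 0)) - 1 / real d\<bar>
      = \<bar>\<Sum>l<n+2. G l * (pb x n l - pm x n l)\<bar>" by simp
  also have "\<dots> \<le> (\<Sum>l<n+2. \<bar>G l * (pb x n l - pm x n l)\<bar>)" by (rule sum_abs)
  also have "\<dots> \<le> (\<Sum>l<n+2. \<bar>pb x n l - pm x n l\<bar>)"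
  proof (intro sum_mono)
    fix l
    have "\<bar>G l\<bar> \<le> 1" unfolding G_def g_def using G_bound[OF assms(3)] .
    thus "\<bar>G l * (pb x n l - pm x n l)\<bar> \<le> \<bar>pb x n l - pm x n l\<bar>"
      by (simp add: abs_mult mult_left_le_one_le)
  qed
  finally show ?thesis .
qed


lemma mu_abs: "\<bar>mu d\<bar> \<le> 1"
  unfolding mu_def by (simp add: power_abs)

lemma mu_1: "mu 1 = 1" unfolding mu_def by simp

lemma mu_mult_prime:
  assumes p: "prime p" and e: "e > 0"
  shows "mu (p * e) = (if p dvd e then 0 else - mu e)"
proof (cases "p dvd e")
  case True
  then obtain k where "e = p * k" by blast
  hence "p^2 dvd p * e" by (simp add: power2_eq_square)
  hence "\<not> squarefree (p * e)" using p unfolding squarefree_def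
    by (metis is_unit_power_iff not_prime_unit power_one_right one_add_one)
  then show ?thesis using True by (simp add: mu_def)
next
  case False
  have cop: "coprime p e" using p False by (simp add: prime_imp_coprime)
  have sq: "squarefree (p * e) = squarefree e"
    using squarefree_mult_coprime[OF cop squarefree_prime[OF p]] squarefree_multD(2)[of p e] by blast
  have pf: "prime_factors (p * e) = insert p (prime_factors e)"
    using p e by (simp add: prime_factors_product prime_prime_factors)
  have nin: "p \<notin> prime_factors e" using False by auto
  have "card (prime_factors (p * e)) = Suc (card (prime_factors e))"
    unfolding pf using nin by simp
  then show ?thesis using False p e sq by (simp add: mu_def)
qed

lemma mu_sum:
  assumes "N > 0"
  shows "(\<Sum>d\<in>{d. d dvd N}. mu d) = (if N = 1 then 1 else 0)"
proof (cases "N = 1")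
  case True then show ?thesis using mu_1 by simp
next
  case False
  then obtain p where p: "prime p" "p dvd N" using assms by (metis prime_factor_nat)
  then obtain M where M: "N = p * M" by blast
  have M0: "M > 0" using M assms by auto
  have fin: "finite {d. d dvd N}" using assms by simp
  have split: "(\<Sum>d\<in>{d. d dvd N}. mu d) = (\<Sum>d\<in>{d. d dvd N \<and> p dvd d}. mu d) + (\<Sum>d\<in>{d. d dvd N \<and> \<not> p dvd d}. mu d)"
  proof -
    have "(\<Sum>d\<in>{d. d dvd N}. mu d) = (\<Sum>d\<in>{d. d dvd N} \<inter> {d. p dvd d}. mu d) + (\<Sum>d\<in>{d. d dvd N} - {d. p dvd d}. mu d)"
      using fin by (rule sum.Int_Diff)
    moreover have "{d. d dvd N} \<inter> {d. p dvd d} = {d. d dvd N \<and> p dvd d}" "{d. d dvd N} - {d. p dvd d} = {d. d dvd N \<and> \<not> p dvd d}" by auto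
    ultimately show ?thesis by simp
  qed
  have img: "{d. d dvd N \<and> p dvd d} = (\<lambda>e. p * e) ` {e. e dvd M}"
    using M p by (auto simp: dvd_def)
  have inj: "inj_on (\<lambda>e. p * e) {e. e dvd M}" using p by (auto simp: inj_on_def prime_gt_0_nat)
  have "(\<Sum>d\<in>{d. d dvd N \<and> p dvd d}. mu d) = (\<Sum>e\<in>{e. e dvd M}. mu (p * e))"
    unfolding img by (rule sum.reindex[OF inj, unfolded comp_def])
  also have "\<dots> = (\<Sum>e\<in>{e. e dvd M}. if p dvd e then 0 else - mu e)"
    by (intro sum.cong refl mu_mult_prime p) (use M0 in \<open>auto intro: dvd_pos_nat\<close>)
  also have "\<dots> = - (\<Sum>e\<in>{e. e dvd M \<and> \<not> p dvd e}. mu e)"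
  proof -
    have finM: "finite {e. e dvd M}" using M0 by simp
    have "(\<Sum>e\<in>{e. e dvd M}. if p dvd e then 0 else - mu e) = (\<Sum>e\<in>{e. e dvd M}. if \<not> p dvd e then - mu e else 0)"
      by (intro sum.cong) auto
    also have "\<dots> = (\<Sum>e\<in>{e \<in> {e. e dvd M}. \<not> p dvd e}. - mu e)"
      using sum.inter_filter[OF finM, symmetric] .
    also have "{e \<in> {e. e dvd M}. \<not> p dvd e} = {e. e dvd M \<and> \<not> p dvd e}" by auto
    finally show ?thesis by (simp add: sum_negf)
  qed
  also have "{e. e dvd M \<and> \<not> p dvd e} = {d. d dvd N \<and> \<not> p dvd d}"
  proof safe
    fix e assume "e dvd N" "\<not> p dvd e"
    hence "coprime e p" using p by (metis coprime_commute prime_imp_coprime)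
    thus "e dvd M" using \<open>e dvd N\<close> M by (metis coprime_dvd_mult_right_iff)
  qed (use M in auto)
  finally show ?thesis using split False by simp
qed


lemma coprime_ind:
  assumes "m > 0"
  shows "(if gcd k m = 1 then 1 else 0 :: real) = (\<Sum>d\<in>{d. d dvd m}. real_of_int (mu d) * (if d dvd k then 1 else 0))"
proof -
  have fin: "finite {d. d dvd m}" using assms by simp
  have g0: "gcd k m > 0" using assms by simp
  have "(\<Sum>d\<in>{d. d dvd m}. real_of_int (mu d) * (if d dvd k then 1 else 0)) =
        (\<Sum>d\<in>{d. d dvd m}. if d dvd k then real_of_int (mu d) else 0)"
    by (intro sum.cong) auto
  also have "\<dots> = (\<Sum>d\<in>{d \<in> {d. d dvd m}. d dvd k}. real_of_int (mu d))"
    using sum.inter_filter[OF fin, symmetric] .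
  also have "{d \<in> {d. d dvd m}. d dvd k} = {d. d dvd gcd k m}" by auto
  also have "(\<Sum>d\<in>{d. d dvd gcd k m}. real_of_int (mu d)) = real_of_int (\<Sum>d\<in>{d. d dvd gcd k m}. mu d)"
    by simp
  also have "\<dots> = (if gcd k m = 1 then 1 else 0)" using mu_sum[OF g0] by simp
  finally show ?thesis by simp
qed

theorem lemma2:
  fixes \<alpha> :: real
  assumes "0 < \<alpha>" and "\<alpha> \<le> 1/2"
  shows "\<exists>C>0. \<forall>n::nat. \<forall>a::nat. \<forall>b::nat. n \<ge> 1 \<longrightarrow>
    \<bar>(\<Sum>l=0..n. real (n choose l) * \<alpha> ^ l * (1 - \<alpha>) ^ (n - l) *
          (if gcd (l + a) (n + b) = 1 then 1 else 0))
      - (\<Sum>d | d dvd (n + b). real_of_int (mu d) / real d)\<bar>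
    \<le> C * real (tau (n + b)) / sqrt (real n)"
proof (intro exI[of _ "8 / \<alpha>"] conjI allI impI)
  show "8 / \<alpha> > 0" using assms by simp
  fix n a b :: nat assume n: "n \<ge> 1"
  define m where "m = n + b"
  have m: "m > 0" using n by (simp add: m_def)
  define D where "D = {d. d dvd m}"
  have finD: "finite D" using m by (simp add: D_def)
  define S where "S d = (\<Sum>l\<le>n. pb \<alpha> n l * (if d dvd l + a then 1 else 0))" for d
  define V where "V = (\<Sum>l<n+2. \<bar>pb \<alpha> n l - pm \<alpha> n l\<bar>)"
  have V: "V \<le> 8 / (\<alpha> * sqrt (real n))" unfolding V_def using V_bound[OF assms n] .
  have "(\<Sum>l=0..n. real (n choose l) * \<alpha> ^ l * (1 - \<alpha>) ^ (n - l) * (if gcd (l + a) (n + b) = 1 then 1 else 0))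
      = (\<Sum>l\<le>n. pb \<alpha> n l * (\<Sum>d\<in>D. real_of_int (mu d) * (if d dvd l + a then 1 else 0)))"
    unfolding atLeast0AtMost pb_def D_def m_def[symmetric] coprime_ind[OF m] ..
  also have "\<dots> = (\<Sum>d\<in>D. real_of_int (mu d) * S d)"
    unfolding S_def by (simp add: sum_distrib_left sum_distrib_right mult_ac sum.swap[of _ "{..n}"])
  finally have L: "(\<Sum>l=0..n. real (n choose l) * \<alpha> ^ l * (1 - \<alpha>) ^ (n - l) * (if gcd (l + a) (n + b) = 1 then 1 else 0))
      - (\<Sum>d | d dvd (n + b). real_of_int (mu d) / real d) = (\<Sum>d\<in>D. real_of_int (mu d) * (S d - 1 / real d))"
    unfolding D_def m_def by (simp add: sum_subtractf right_diff_distrib)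
  have "\<bar>\<Sum>d\<in>D. real_of_int (mu d) * (S d - 1 / real d)\<bar> \<le> (\<Sum>d\<in>D. \<bar>real_of_int (mu d) * (S d - 1 / real d)\<bar>)"
    by (rule sum_abs)
  also have "\<dots> \<le> (\<Sum>d\<in>D. 8 / (\<alpha> * sqrt (real n)))"
  proof (intro sum_mono)
    fix d assume "d \<in> D"
    hence d0: "d > 0" using m by (auto simp: D_def intro: dvd_pos_nat)
    have "\<bar>S d - 1 / real d\<bar> \<le> V" unfolding S_def V_def using equi[OF assms d0] .
    moreover have "\<bar>real_of_int (mu d)\<bar> \<le> 1" using mu_abs[of d] by linarith
    ultimately have "\<bar>real_of_int (mu d) * (S d - 1 / real d)\<bar> \<le> 1 * V"
      unfolding abs_mult by (intro mult_mono) auto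
    thus "\<bar>real_of_int (mu d) * (S d - 1 / real d)\<bar> \<le> 8 / (\<alpha> * sqrt (real n))" using V by simp
  qed
  also have "\<dots> = 8 / \<alpha> * real (tau (n + b)) / sqrt (real n)"
    by (simp add: tau_def D_def m_def)
  finally show "\<bar>(\<Sum>l=0..n. real (n choose l) * \<alpha> ^ l * (1 - \<alpha>) ^ (n - l) *
          (if gcd (l + a) (n + b) = 1 then 1 else 0))
      - (\<Sum>d | d dvd (n + b). real_of_int (mu d) / real d)\<bar>
    \<le> 8 / \<alpha> * real (tau (n + b)) / sqrt (real n)" unfolding L .
qed

end
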